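(* Let $f \colon Q \twoheadrightarrow Q'$ be a partial surjection between finite sets and $A$ a simple type. Then $D_Q(A)$ is contained in the domain of the partial function $[\![A]\!]_f$, and the restriction of $[\![A]\!]_f$ to $D_Q(A)$ is the unique function $p_{Q,Q'} \colon D_Q(A) \to D_{Q'}(A)$ satisfying $p_{Q,Q'}([\![M]\!]_Q) = [\![M]\!]_{Q'}$ for all $M \in \Lambda(A)$; in particular $p_{Q,Q'}$ is surjective.
   Context: Simple types are generated from a base type $o$ by $\Rightarrow$; $\Lambda(A)$ is the set of closed simply typed $\lambda$-terms of type $A$ modulo $\beta\eta$. For a finite set $Q$: $[\![o]\!]_Q = Q$, $[\![A\Rightarrow B]\!]_Q$ = all functions $[\![A]\!]_Q \to [\![B]\!]_Q$, and $[\![M]\!]_Q$ is the standard interpretation. $D_Q(A) = \{[\![M]\!]_Q : M \in \Lambda(A)\}$. For $R \subseteq Q\times Q'$, the logical relation $[\![A]\!]_R \subseteq [\![A]\!]_Q \times [\![A]\!]_{Q'}$ is given by $[\![o]\!]_R = R$ and $[\![A\Rightarrow B]\!]_R = \{(g,h) : \forall (x,y)\in[\![A]\!]_R,\ (g(x),h(y))\in[\![B]\!]_R\}$. A partial surjection $f \colon Q \twoheadrightarrow Q'$ is a relation that is the graph of a partial function surjective onto $Q'$; it is a standard fact (which may be used) that then $[\![A]\!]_f$ is also a partial surjection. *)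

theory Defs
  imports Main "HOL-Library.FSet" "HOL-Library.FuncSet"
begin

datatype ty = TO | Arr ty ty

datatype tm = Var nat | App tm tm | Lam ty tm

inductive typing :: "ty list \<Rightarrow> tm \<Rightarrow> ty \<Rightarrow> bool" where
  T_Var: "i < length \<Gamma> \<Longrightarrow> typing \<Gamma> (Var i) (\<Gamma> ! i)"
| T_App: "typing \<Gamma> M (Arr A B) \<Longrightarrow> typing \<Gamma> N A \<Longrightarrow> typing \<Gamma> (App M N) B"
| T_Lam: "typing (A # \<Gamma>) M B \<Longrightarrow> typing \<Gamma> (Lam A M) (Arr A B)"

datatype 'q val = Base 'q | Fun "('q val \<times> 'q val) fset"

definition app :: "'q val \<Rightarrow> 'q val \<Rightarrow> 'q val" where
  "app f x = (case f of Fun g \<Rightarrow> (THE y. (x, y) |\<in>| g) | Base _ \<Rightarrow> undefined)"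

fun sem :: "'q set \<Rightarrow> ty \<Rightarrow> 'q val set" where
  "sem Q TO = Base ` Q"
| "sem Q (Arr A B) = {Fun g | g.
      fst ` fset g = sem Q A \<and> snd ` fset g \<subseteq> sem Q B \<and>
      (\<forall>x y z. (x, y) |\<in>| g \<longrightarrow> (x, z) |\<in>| g \<longrightarrow> y = z)}"

primrec eval :: "'q set \<Rightarrow> tm \<Rightarrow> 'q val list \<Rightarrow> 'q val" where
  "eval Q (Var i) env = env ! i"
| "eval Q (App M N) env = app (eval Q M env) (eval Q N env)"
| "eval Q (Lam A M) env = Fun (Abs_fset ((\<lambda>x. (x, eval Q M (x # env))) ` sem Q A))"

definition den :: "'q set \<Rightarrow> tm \<Rightarrow> 'q val" where
  "den Q M = eval Q M []"

definition D :: "'q set \<Rightarrow> ty \<Rightarrow> 'q val set" where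
  "D Q A = {den Q M | M. typing [] M A}"

fun lrel :: "'q set \<Rightarrow> 'r set \<Rightarrow> ('q \<times> 'r) set \<Rightarrow> ty \<Rightarrow> ('q val \<times> 'r val) set" where
  "lrel Q Q' R TO = {(Base a, Base b) | a b. (a, b) \<in> R}"
| "lrel Q Q' R (Arr A B) = {(g, h). g \<in> sem Q (Arr A B) \<and> h \<in> sem Q' (Arr A B) \<and>
      (\<forall>x y. (x, y) \<in> lrel Q Q' R A \<longrightarrow> (app g x, app h y) \<in> lrel Q Q' R B)}"

definition partial_surj :: "'q set \<Rightarrow> 'r set \<Rightarrow> ('q \<times> 'r) set \<Rightarrow> bool" where
  "partial_surj Q Q' R \<longleftrightarrow> R \<subseteq> Q \<times> Q' \<and> single_valued R \<and> Range R = Q'"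

end

theory Submission
  imports Defs
begin

definition mkf :: "'q val set \<Rightarrow> ('q val \<Rightarrow> 'q val) \<Rightarrow> 'q val" where
  "mkf S G = Fun (Abs_fset ((\<lambda>x. (x, G x)) ` S))"

lemma app_Fun:
  assumes "\<forall>x y z. (x, y) |\<in>| g \<longrightarrow> (x, z) |\<in>| g \<longrightarrow> y = z" "(x, y) |\<in>| g"
  shows "app (Fun g) x = y"
  using assms unfolding app_def by (auto intro!: the_equality)

lemma fset_mk: "finite S \<Longrightarrow> fset (Abs_fset ((\<lambda>x. (x, G x)) ` S)) = (\<lambda>x. (x, G x)) ` S"
  by (simp add: Abs_fset_inverse)

lemma finite_sem: "finite Q \<Longrightarrow> finite (sem Q A)"
proof (induction A)
  case TO then show ?case by simp
next
  case (Arr A B)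
  let ?S = "sem Q A \<times> sem Q B"
  have fS: "finite ?S" using Arr by simp
  have "sem Q (Arr A B) \<subseteq> (\<lambda>X. Fun (Abs_fset X)) ` Pow ?S"
  proof
    fix v assume "v \<in> sem Q (Arr A B)"
    then obtain g where v: "v = Fun g" and g1: "fst ` fset g = sem Q A" and g2: "snd ` fset g \<subseteq> sem Q B"
      by auto
    have "fset g \<subseteq> ?S" using g1 g2 by force
    moreover have "g = Abs_fset (fset g)" by (simp add: fset_inverse)
    ultimately show "v \<in> (\<lambda>X. Fun (Abs_fset X)) ` Pow ?S" using v by blast
  qed
  then show ?case using fS by (meson finite_Pow_iff finite_imageI finite_subset)
qed

lemma mkf_sem:
  assumes "finite Q" "\<forall>x\<in>sem Q A. G x \<in> sem Q B"
  shows "mkf (sem Q A) G \<in> sem Q (Arr A B)"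
proof -
  have f: "finite (sem Q A)" using finite_sem assms(1) by blast
  show ?thesis unfolding mkf_def using fset_mk[OF f, of G] assms(2)
    by (auto simp: image_image)
qed

lemma mkf_app:
  assumes "finite Q" "x \<in> sem Q A"
  shows "app (mkf (sem Q A) G) x = G x"
proof -
  have f: "finite (sem Q A)" using finite_sem assms(1) by blast
  show ?thesis unfolding mkf_def
    by (rule app_Fun) (use fset_mk[OF f, of G] assms(2) in auto)
qed

lemma app_sem:
  assumes "g \<in> sem Q (Arr A B)" "x \<in> sem Q A"
  shows "app g x \<in> sem Q B"
proof -
  obtain k where g: "g = Fun k" and k1: "fst ` fset k = sem Q A" and k2: "snd ` fset k \<subseteq> sem Q B"
    and k3: "\<forall>x y z. (x, y) |\<in>| k \<longrightarrow> (x, z) |\<in>| k \<longrightarrow> y = z"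
    using assms(1) by auto
  obtain y where "(x, y) |\<in>| k" using k1 assms(2) by force
  moreover then have "app g x = y" using g k3 app_Fun by metis
  ultimately show ?thesis using k2 by force
qed

lemma fun_ext:
  assumes "Fun k \<in> sem Q (Arr A B)" "Fun k' \<in> sem Q (Arr A B)"
    "\<forall>y\<in>sem Q A. app (Fun k) y = app (Fun k') y"
  shows "k = k'"
proof -
  have k1: "fst ` fset k = sem Q A" and k3: "\<forall>x y z. (x, y) |\<in>| k \<longrightarrow> (x, z) |\<in>| k \<longrightarrow> y = z"
    using assms(1) by auto
  have k1': "fst ` fset k' = sem Q A" and k3': "\<forall>x y z. (x, y) |\<in>| k' \<longrightarrow> (x, z) |\<in>| k' \<longrightarrow> y = z"
    using assms(2) by auto
  have "(a, b) |\<in>| k \<longleftrightarrow> (a, b) |\<in>| k'" for a b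
  proof
    assume h: "(a, b) |\<in>| k"
    then have a: "a \<in> sem Q A" using k1 by force
    then obtain b' where h': "(a, b') |\<in>| k'" using k1' by force
    have "b = b'" using app_Fun[OF k3 h] app_Fun[OF k3' h'] assms(3) a by auto
    then show "(a, b) |\<in>| k'" using h' by simp
  next
    assume h: "(a, b) |\<in>| k'"
    then have a: "a \<in> sem Q A" using k1' by force
    then obtain b' where h': "(a, b') |\<in>| k" using k1 by force
    have "b = b'" using app_Fun[OF k3 h'] app_Fun[OF k3' h] assms(3) a by auto
    then show "(a, b) |\<in>| k" using h' by simp
  qed
  then show ?thesis by (metis fset_eqI surj_pair)
qed

lemma sem_ne: "finite Q \<Longrightarrow> Q \<noteq> {} \<Longrightarrow> sem Q T \<noteq> {}"
proof (induction T)
  case TO then show ?case by simp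
next
  case (Arr A B)
  then obtain b where "b \<in> sem Q B" by blast
  then have "mkf (sem Q A) (\<lambda>_. b) \<in> sem Q (Arr A B)" using mkf_sem[OF Arr.prems(1), of A "\<lambda>_. b" B] by blast
  then show ?case by blast
qed

lemma sem_arr_empty:
  assumes "finite Q"
  shows "sem Q (Arr A B) = {} \<longleftrightarrow> sem Q A \<noteq> {} \<and> sem Q B = {}"
proof
  assume h: "sem Q (Arr A B) = {}"
  show "sem Q A \<noteq> {} \<and> sem Q B = {}"
  proof (rule ccontr)
    assume "\<not> (sem Q A \<noteq> {} \<and> sem Q B = {})"
    then have "\<forall>x\<in>sem Q A. (SOME b. b \<in> sem Q B) \<in> sem Q B"
      by (metis ex_in_conv someI)
    then have "mkf (sem Q A) (\<lambda>_. SOME b. b \<in> sem Q B) \<in> sem Q (Arr A B)"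
      by (rule mkf_sem[OF assms])
    then show False using h by blast
  qed
next
  assume h: "sem Q A \<noteq> {} \<and> sem Q B = {}"
  show "sem Q (Arr A B) = {}"
  proof (rule ccontr)
    assume "sem Q (Arr A B) \<noteq> {}"
    then obtain g where "g \<in> sem Q (Arr A B)" by blast
    moreover obtain x where "x \<in> sem Q A" using h by blast
    ultimately show False using app_sem h by blast
  qed
qed

lemma sem_empty_iff:
  assumes "finite Q" "finite Q'" "Q = {}" "Q' = {}"
  shows "sem Q T = {} \<longleftrightarrow> sem Q' T = {}"
proof (induction T)
  case TO then show ?case using assms by simp
next
  case (Arr A B) then show ?case using sem_arr_empty[OF assms(1), of A B] sem_arr_empty[OF assms(2), of A B] by blast
qed

lemma lrel_ArrD: "(g, h) \<in> lrel Q Q' R (Arr A B) \<Longrightarrow> g \<in> sem Q (Arr A B) \<and> h \<in> sem Q' (Arr A B) \<and>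
   (\<forall>x y. (x, y) \<in> lrel Q Q' R A \<longrightarrow> (app g x, app h y) \<in> lrel Q Q' R B)"
  unfolding lrel.simps(2) mem_Collect_eq prod.case .

lemma sem_ArrE: "h \<in> sem Q (Arr A B) \<Longrightarrow> \<exists>k. h = Fun k"
  by auto

lemma eval_sem:
  assumes "typing \<Gamma> M T" "finite Q" "length env = length \<Gamma>" "\<forall>i<length \<Gamma>. env ! i \<in> sem Q (\<Gamma> ! i)"
  shows "eval Q M env \<in> sem Q T"
  using assms
proof (induction arbitrary: env rule: typing.induct)
  case (T_Var i \<Gamma>) then show ?case by simp
next
  case (T_App \<Gamma> M A B N)
  then show ?case using app_sem[OF T_App.IH(1)[OF T_App.prems] T_App.IH(2)[OF T_App.prems]] by simp
next
  case (T_Lam A \<Gamma> M B)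
  have "\<forall>x\<in>sem Q A. eval Q M (x # env) \<in> sem Q B"
  proof
    fix x assume x: "x \<in> sem Q A"
    show "eval Q M (x # env) \<in> sem Q B"
      using T_Lam.IH[of "x # env"] T_Lam.prems x by (auto simp: nth_Cons split: nat.splits)
  qed
  then have "mkf (sem Q A) (\<lambda>x. eval Q M (x # env)) \<in> sem Q (Arr A B)"
    by (rule mkf_sem[OF T_Lam.prems(1)])
  moreover have "eval Q (Lam A M) env = mkf (sem Q A) (\<lambda>x. eval Q M (x # env))"
    by (simp add: mkf_def)
  ultimately show ?case by (simp only:)
qed

context
  fixes Q :: "'q set" and Q' :: "'r set" and R :: "('q \<times> 'r) set"
  assumes fQ: "finite Q" and fQ': "finite Q'" and ps: "partial_surj Q Q' R"
begin

lemma lrel_sem: "x \<in> sem Q T \<and> y \<in> sem Q' T" if "(x, y) \<in> lrel Q Q' R T"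
proof (cases T)
  case TO
  then show ?thesis using that ps unfolding partial_surj_def by auto
next
  case (Arr A B)
  then show ?thesis using that lrel_ArrD by blast
qed

lemma lrel_main: "single_valued (lrel Q Q' R T) \<and> Range (lrel Q Q' R T) = sem Q' T"
proof (induction T)
  case TO
  have svR: "single_valued R" and rR: "Range R = Q'" using ps unfolding partial_surj_def by blast+
  have l: "lrel Q Q' R TO = (\<lambda>(a, b). (Base a, Base b)) ` R" by auto
  have "single_valued (lrel Q Q' R TO)"
  proof (rule single_valuedI)
    fix x y z assume "(x, y) \<in> lrel Q Q' R TO" "(x, z) \<in> lrel Q Q' R TO"
    then obtain a b a' c where "(a, b) \<in> R" "(a', c) \<in> R" "x = Base a" "y = Base b" "x = Base a'" "z = Base c"
      unfolding l by auto
    then show "y = z" using svR by (metis single_valuedD val.inject(1))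
  qed
  moreover have "Range (lrel Q Q' R TO) = sem Q' TO" unfolding l using rR by force
  ultimately show ?case by blast
next
  case (Arr A B)
  have sA: "single_valued (lrel Q Q' R A)" and rA: "Range (lrel Q Q' R A) = sem Q' A"
    and sB: "single_valued (lrel Q Q' R B)" and rB: "Range (lrel Q Q' R B) = sem Q' B"
    using Arr by auto
  have sv: "single_valued (lrel Q Q' R (Arr A B))"
  proof (rule single_valuedI)
    fix g h h' assume h: "(g, h) \<in> lrel Q Q' R (Arr A B)" and h': "(g, h') \<in> lrel Q Q' R (Arr A B)"
    have hA: "h \<in> sem Q' (Arr A B)" and hA': "h' \<in> sem Q' (Arr A B)"
      and hr: "\<forall>x y. (x, y) \<in> lrel Q Q' R A \<longrightarrow> (app g x, app h y) \<in> lrel Q Q' R B"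
      and hr': "\<forall>x y. (x, y) \<in> lrel Q Q' R A \<longrightarrow> (app g x, app h' y) \<in> lrel Q Q' R B"
      using lrel_ArrD[OF h] lrel_ArrD[OF h'] by blast+
    obtain k where k: "h = Fun k" using sem_ArrE[OF hA] by blast
    obtain k' where k': "h' = Fun k'" using sem_ArrE[OF hA'] by blast
    have "\<forall>y\<in>sem Q' A. app (Fun k) y = app (Fun k') y"
    proof
      fix y assume "y \<in> sem Q' A"
      then obtain x where xy: "(x, y) \<in> lrel Q Q' R A" using rA by blast
      then have "(app g x, app h y) \<in> lrel Q Q' R B" "(app g x, app h' y) \<in> lrel Q Q' R B"
        using hr hr' by blast+
      then show "app (Fun k) y = app (Fun k') y" using sB k k' by (metis single_valuedD)
    qed
    then have "k = k'" using fun_ext[of k Q' A B k'] hA hA' k k' by blast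
    then show "h = h'" using k k' by simp
  qed
  have "sem Q' (Arr A B) \<subseteq> Range (lrel Q Q' R (Arr A B))"
  proof
    fix h assume hs: "h \<in> sem Q' (Arr A B)"
    define G where "G x = (if x \<in> Domain (lrel Q Q' R A)
        then (SOME z. (z, app h (THE y. (x, y) \<in> lrel Q Q' R A)) \<in> lrel Q Q' R B)
        else (SOME z. z \<in> sem Q B))" for x
    have G1: "(G x, app h y) \<in> lrel Q Q' R B" if xy: "(x, y) \<in> lrel Q Q' R A" for x y
    proof -
      have th: "(THE y. (x, y) \<in> lrel Q Q' R A) = y"
        using xy sA by (metis single_valuedD the_equality)
      have "x \<in> Domain (lrel Q Q' R A)" using xy by blast
      then have Gx: "G x = (SOME z. (z, app h y) \<in> lrel Q Q' R B)"
        unfolding G_def th by (rule if_P)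
      have "app h y \<in> sem Q' B" using app_sem hs lrel_sem[OF xy] by blast
      then have "\<exists>z. (z, app h y) \<in> lrel Q Q' R B" using rB by blast
      then show ?thesis unfolding Gx by (rule someI_ex)
    qed
    have "\<forall>x\<in>sem Q A. G x \<in> sem Q B"
    proof
      fix x assume x: "x \<in> sem Q A"
      show "G x \<in> sem Q B"
      proof (cases "x \<in> Domain (lrel Q Q' R A)")
        case True
        then obtain y where "(x, y) \<in> lrel Q Q' R A" by blast
        then show ?thesis using G1 lrel_sem by blast
      next
        case False
        have "sem Q B \<noteq> {}"
        proof (cases "Q = {}")
          case True
          then have Q'e: "Q' = {}" using ps unfolding partial_surj_def by auto
          show ?thesis
          proof
            assume e: "sem Q B = {}"
            then have "sem Q' B = {}" using sem_empty_iff[OF fQ fQ' True Q'e] by blast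
            moreover have "sem Q' A \<noteq> {}" using sem_empty_iff[OF fQ fQ' True Q'e, of A] x by blast
            ultimately show False using hs app_sem by blast
          qed
        next
          case False then show ?thesis using sem_ne fQ by blast
        qed
        then have "(SOME z. z \<in> sem Q B) \<in> sem Q B" by (metis some_in_eq)
        moreover have "G x = (SOME z. z \<in> sem Q B)" unfolding G_def using False by (rule if_not_P)
        ultimately show ?thesis by (simp only:)
      qed
    qed
    then have gs: "mkf (sem Q A) G \<in> sem Q (Arr A B)" by (rule mkf_sem[OF fQ])
    have ap: "(app (mkf (sem Q A) G) x, app h y) \<in> lrel Q Q' R B" if xy: "(x, y) \<in> lrel Q Q' R A" for x y
    proof -
      have "x \<in> sem Q A" using lrel_sem[OF xy] by blast
      then have "app (mkf (sem Q A) G) x = G x" by (rule mkf_app[OF fQ])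
      then show ?thesis using G1[OF xy] by (simp only:)
    qed
    have "(mkf (sem Q A) G, h) \<in> lrel Q Q' R (Arr A B)"
      using gs hs ap by (simp only: lrel.simps(2) mem_Collect_eq prod.case) blast
    then show "h \<in> Range (lrel Q Q' R (Arr A B))" by (rule RangeI)
  qed
  moreover have "Range (lrel Q Q' R (Arr A B)) \<subseteq> sem Q' (Arr A B)"
  proof
    fix h assume "h \<in> Range (lrel Q Q' R (Arr A B))"
    then obtain g where "(g, h) \<in> lrel Q Q' R (Arr A B)" by (rule RangeE)
    then show "h \<in> sem Q' (Arr A B)" using lrel_sem by blast
  qed
  ultimately have "Range (lrel Q Q' R (Arr A B)) = sem Q' (Arr A B)" by (rule equalityI[rotated])
  with sv show ?case by (rule conjI)
qed

lemma fundamental: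
  assumes "typing \<Gamma> M T" "length env = length \<Gamma>" "length env' = length \<Gamma>"
    "\<forall>i<length \<Gamma>. (env ! i, env' ! i) \<in> lrel Q Q' R (\<Gamma> ! i)"
  shows "(eval Q M env, eval Q' M env') \<in> lrel Q Q' R T"
  using assms
proof (induction arbitrary: env env' rule: typing.induct)
  case (T_Var i \<Gamma>) then show ?case by simp
next
  case (T_App \<Gamma> M A B N)
  have "(eval Q M env, eval Q' M env') \<in> lrel Q Q' R (Arr A B)" "(eval Q N env, eval Q' N env') \<in> lrel Q Q' R A"
    using T_App.IH T_App.prems by blast+
  then show ?case by simp
next
  case (T_Lam A \<Gamma> M B)
  have e1: "\<forall>i<length \<Gamma>. env ! i \<in> sem Q (\<Gamma> ! i)" and e2: "\<forall>i<length \<Gamma>. env' ! i \<in> sem Q' (\<Gamma> ! i)"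
    using T_Lam.prems(3) lrel_sem by blast+
  have s1: "eval Q (Lam A M) env \<in> sem Q (Arr A B)"
    using eval_sem[OF typing.T_Lam[OF T_Lam.hyps] fQ] T_Lam.prems e1 by auto
  have s2: "eval Q' (Lam A M) env' \<in> sem Q' (Arr A B)"
    using eval_sem[OF typing.T_Lam[OF T_Lam.hyps] fQ'] T_Lam.prems e2 by auto
  have "(app (eval Q (Lam A M) env) x, app (eval Q' (Lam A M) env') y) \<in> lrel Q Q' R B"
    if xy: "(x, y) \<in> lrel Q Q' R A" for x y
  proof -
    have x: "x \<in> sem Q A" and y: "y \<in> sem Q' A" using lrel_sem[OF xy] by auto
    have "app (eval Q (Lam A M) env) x = eval Q M (x # env)"
      using mkf_app[OF fQ x] by (simp add: mkf_def)
    moreover have "app (eval Q' (Lam A M) env') y = eval Q' M (y # env')"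
      using mkf_app[OF fQ' y] by (simp add: mkf_def)
    moreover have "(eval Q M (x # env), eval Q' M (y # env')) \<in> lrel Q Q' R B"
      using T_Lam.IH[of "x # env" "y # env'"] T_Lam.prems xy
      by (auto simp: nth_Cons split: nat.splits)
    ultimately show ?thesis by simp
  qed
  then show ?case using s1 s2 by (simp only: lrel.simps(2) mem_Collect_eq prod.case) blast
qed

lemma den_rel: "typing [] M T \<Longrightarrow> (den Q M, den Q' M) \<in> lrel Q Q' R T"
  unfolding den_def using fundamental[of "[]" M T "[]" "[]"] by simp

end

theorem mainTheorem6:
  fixes Q :: "'q set" and Q' :: "'r set" and R :: "('q \<times> 'r) set" and A :: ty
  assumes "finite Q" and "finite Q'" and "partial_surj Q Q' R"
  shows "D Q A \<subseteq> Domain (lrel Q Q' R A)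
    \<and> (\<exists>!p. p \<in> D Q A \<rightarrow>\<^sub>E D Q' A \<and> (\<forall>M. typing [] M A \<longrightarrow> p (den Q M) = den Q' M))
    \<and> (\<forall>p. p \<in> D Q A \<rightarrow>\<^sub>E D Q' A \<and> (\<forall>M. typing [] M A \<longrightarrow> p (den Q M) = den Q' M) \<longrightarrow>
          (\<forall>x \<in> D Q A. \<forall>y. (x, y) \<in> lrel Q Q' R A \<longleftrightarrow> y = p x) \<and> p ` D Q A = D Q' A)"
proof -
  note dr = den_rel[OF assms]
  have sv: "single_valued (lrel Q Q' R A)" using lrel_main[OF assms] by blast
  have wd: "den Q' M = den Q' N" if "typing [] M A" "typing [] N A" "den Q M = den Q N" for M N
    using dr[OF that(1)] dr[OF that(2)] that(3) sv by (metis single_valuedD)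
  have P1: "D Q A \<subseteq> Domain (lrel Q Q' R A)" unfolding D_def using dr by blast
  define p0 where "p0 = restrict (\<lambda>x. den Q' (SOME M. typing [] M A \<and> den Q M = x)) (D Q A)"
  have p0M: "p0 (den Q M) = den Q' M" if "typing [] M A" for M
  proof -
    have dm: "den Q M \<in> D Q A" using that unfolding D_def by blast
    have "\<exists>N. typing [] N A \<and> den Q N = den Q M" using that by blast
    then have "typing [] (SOME N. typing [] N A \<and> den Q N = den Q M) A \<and>
      den Q (SOME N. typing [] N A \<and> den Q N = den Q M) = den Q M" by (rule someI_ex)
    then have "den Q' (SOME N. typing [] N A \<and> den Q N = den Q M) = den Q' M"
      using wd[OF _ that] by blast
    moreover have "p0 (den Q M) = den Q' (SOME N. typing [] N A \<and> den Q N = den Q M)"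
      unfolding p0_def using dm by (simp only: restrict_apply' mem_Collect_eq)
    ultimately show ?thesis by (simp only:)
  qed
  have p0E: "p0 \<in> D Q A \<rightarrow>\<^sub>E D Q' A"
  proof
    fix x assume "x \<in> D Q A"
    then obtain M where "typing [] M A" "x = den Q M" unfolding D_def by blast
    then show "p0 x \<in> D Q' A" using p0M unfolding D_def by auto
  next
    fix x assume "x \<notin> D Q A" then show "p0 x = undefined" unfolding p0_def by simp
  qed
  have P3: "(\<forall>x \<in> D Q A. \<forall>y. (x, y) \<in> lrel Q Q' R A \<longleftrightarrow> y = p x) \<and> p ` D Q A = D Q' A"
    if p: "p \<in> D Q A \<rightarrow>\<^sub>E D Q' A" "\<forall>M. typing [] M A \<longrightarrow> p (den Q M) = den Q' M" for p
  proof
    show "\<forall>x \<in> D Q A. \<forall>y. (x, y) \<in> lrel Q Q' R A \<longleftrightarrow> y = p x"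
    proof (intro ballI allI)
      fix x y assume "x \<in> D Q A"
      then obtain M where M: "typing [] M A" "x = den Q M" unfolding D_def by blast
      then show "(x, y) \<in> lrel Q Q' R A \<longleftrightarrow> y = p x"
        using dr[OF M(1)] p(2) sv by (metis single_valuedD)
    qed
    show "p ` D Q A = D Q' A"
    proof
      show "p ` D Q A \<subseteq> D Q' A" using p(1) by auto
      show "D Q' A \<subseteq> p ` D Q A"
      proof
        fix y assume "y \<in> D Q' A"
        then obtain M where M: "typing [] M A" "y = den Q' M" unfolding D_def by blast
        then have "den Q M \<in> D Q A" unfolding D_def by blast
        moreover have "p (den Q M) = y" using p(2) M by simp
        ultimately show "y \<in> p ` D Q A" by (rule rev_image_eqI[OF _ sym])
      qed
    qed
  qed
  have uniq: "p = p0" if p: "p \<in> D Q A \<rightarrow>\<^sub>E D Q' A" "\<forall>M. typing [] M A \<longrightarrow> p (den Q M) = den Q' M" for p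
  proof
    fix x show "p x = p0 x"
    proof (cases "x \<in> D Q A")
      case True
      then obtain M where M: "typing [] M A" "x = den Q M" unfolding D_def by blast
      have "p x = den Q' M" using p(2) M by simp
      moreover have "p0 x = den Q' M" using p0M[OF M(1)] M(2) by simp
      ultimately show ?thesis by simp
    next
      case False then show ?thesis using PiE_arb[OF p(1) False] PiE_arb[OF p0E False] by simp
    qed
  qed
  have P2: "\<exists>!p. p \<in> D Q A \<rightarrow>\<^sub>E D Q' A \<and> (\<forall>M. typing [] M A \<longrightarrow> p (den Q M) = den Q' M)"
  proof (rule ex1I[of _ p0])
    show "p0 \<in> D Q A \<rightarrow>\<^sub>E D Q' A \<and> (\<forall>M. typing [] M A \<longrightarrow> p0 (den Q M) = den Q' M)"
      using p0E p0M by (intro conjI allI impI)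
  next
    fix p assume a: "p \<in> D Q A \<rightarrow>\<^sub>E D Q' A \<and> (\<forall>M. typing [] M A \<longrightarrow> p (den Q M) = den Q' M)"
    show "p = p0" using uniq[OF conjunct1[OF a] conjunct2[OF a]] .
  qed
  have P3': "\<forall>p. p \<in> D Q A \<rightarrow>\<^sub>E D Q' A \<and> (\<forall>M. typing [] M A \<longrightarrow> p (den Q M) = den Q' M) \<longrightarrow>
          (\<forall>x \<in> D Q A. \<forall>y. (x, y) \<in> lrel Q Q' R A \<longleftrightarrow> y = p x) \<and> p ` D Q A = D Q' A"
  proof (intro allI impI)
    fix p assume a: "p \<in> D Q A \<rightarrow>\<^sub>E D Q' A \<and> (\<forall>M. typing [] M A \<longrightarrow> p (den Q M) = den Q' M)"
    show "(\<forall>x \<in> D Q A. \<forall>y. (x, y) \<in> lrel Q Q' R A \<longleftrightarrow> y = p x) \<and> p ` D Q A = D Q' A"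
      using P3[OF conjunct1[OF a] conjunct2[OF a]] .
  qed
  show ?thesis using P1 P2 P3' by (rule conjI[OF _ conjI])
qed

end
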